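(* Let $X$ be a compact metric space whose metric $d$ is an ultrametric, let $0<L<1$, and let $f\colon X\to X$ be a continuous map. The following are equivalent: (1) $f$ has the $L$-Lipschitz shadowing property; (2) there is $\delta_0>0$ such that $B_\delta(f(x))\subset f(B_{L\delta}(x))$ for all $0<\delta\le\delta_0$ and all $x\in X$.
   Context: $d$ is an ultrametric: $d(x,z)\le\max\{d(x,y),d(y,z)\}$ for all $x,y,z$. $B_r(x)=\{y\in X: d(x,y)\le r\}$ is the closed $r$-ball. For $\delta>0$, a sequence $(x_i)_{i\ge0}$ is a $\delta$-pseudo orbit of $f$ if $d(f(x_i),x_{i+1})\le\delta$ for all $i\ge0$; it is $\epsilon$-shadowed by $x$ if $d(f^i(x),x_i)\le\epsilon$ for all $i\ge0$. $f$ has the $L$-Lipschitz shadowing property if there is $\delta_0>0$ such that for every $0<\delta\le\delta_0$, every $\delta$-pseudo orbit of $f$ is $L\delta$-shadowed by some point of $X$. *)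

theory Defs
  imports "HOL-Analysis.Analysis"
begin

definition ultrametric_space :: "'a::metric_space itself \<Rightarrow> bool" where
  "ultrametric_space _ \<longleftrightarrow> (\<forall>x y z::'a. dist x z \<le> max (dist x y) (dist y z))"

definition pseudo_orbit :: "('a::metric_space \<Rightarrow> 'a) \<Rightarrow> real \<Rightarrow> (nat \<Rightarrow> 'a) \<Rightarrow> bool" where
  "pseudo_orbit f \<delta> xs \<longleftrightarrow> (\<forall>i. dist (f (xs i)) (xs (Suc i)) \<le> \<delta>)"

definition shadows :: "('a::metric_space \<Rightarrow> 'a) \<Rightarrow> real \<Rightarrow> 'a \<Rightarrow> (nat \<Rightarrow> 'a) \<Rightarrow> bool" where
  "shadows f \<epsilon> x xs \<longleftrightarrow> (\<forall>i. dist ((f ^^ i) x) (xs i) \<le> \<epsilon>)"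

definition lipschitz_shadowing :: "real \<Rightarrow> ('a::metric_space \<Rightarrow> 'a) \<Rightarrow> bool" where
  "lipschitz_shadowing L f \<longleftrightarrow>
     (\<exists>\<delta>0>0. \<forall>\<delta>. 0 < \<delta> \<and> \<delta> \<le> \<delta>0 \<longrightarrow>
        (\<forall>xs. pseudo_orbit f \<delta> xs \<longrightarrow> (\<exists>x. shadows f (L * \<delta>) x xs)))"

end

theory Submission
  imports Defs
begin

lemma cont_funpow:
  fixes f :: "'a::topological_space \<Rightarrow> 'a"
  assumes "continuous_on UNIV f"
  shows "continuous_on UNIV (f ^^ n)"
proof (induction n)
  case 0
  have "(f ^^ 0) = (\<lambda>x. x)" by auto
  then show ?case using continuous_on_id by metis
next
  case (Suc n)
  have "continuous_on UNIV (f \<circ> (f ^^ n))"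
    by (rule continuous_on_compose) (use Suc assms in \<open>auto elim: continuous_on_subset\<close>)
  then show ?case by simp
qed

lemma dir1:
  fixes f :: "'a::metric_space \<Rightarrow> 'a" and L :: real
  assumes cpt: "compact (UNIV :: 'a set)"
    and um: "ultrametric_space TYPE('a)"
    and L0: "0 < L" and L1: "L < 1"
    and cont: "continuous_on UNIV f"
    and ls: "lipschitz_shadowing L f"
  shows "\<exists>\<delta>0>0. \<forall>\<delta> x. 0 < \<delta> \<and> \<delta> \<le> \<delta>0 \<longrightarrow> cball (f x) \<delta> \<subseteq> f ` cball x (L * \<delta>)"
proof -
  from ls obtain \<delta>0 where d0: "\<delta>0 > 0" and
    sh: "\<And>\<delta> xs. 0 < \<delta> \<Longrightarrow> \<delta> \<le> \<delta>0 \<Longrightarrow> pseudo_orbit f \<delta> xs \<Longrightarrow> \<exists>x. shadows f (L * \<delta>) x xs"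
    unfolding lipschitz_shadowing_def by blast
  have U: "dist a c \<le> max (dist a b) (dist b c)" for a b c :: 'a
    using um unfolding ultrametric_space_def by blast
  show ?thesis
  proof (intro exI[of _ \<delta>0] conjI allI impI d0 subsetI)
    fix \<delta> x y assume H: "0 < \<delta> \<and> \<delta> \<le> \<delta>0" and y: "y \<in> cball (f x) \<delta>"
    have P: "\<exists>z. dist z x \<le> L * \<delta> \<and> dist (f z) y \<le> L ^ n * \<delta>" for n
    proof (induction n)
      case 0 show ?case using y H L0 by (intro exI[of _ x]) auto
    next
      case (Suc n)
      then obtain z where z1: "dist z x \<le> L * \<delta>" and z2: "dist (f z) y \<le> L ^ n * \<delta>" by blast
      define \<eta> where "\<eta> = L ^ n * \<delta>"
      have \<eta>0: "0 < \<eta>" unfolding \<eta>_def using L0 H by simp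
      have "L ^ n \<le> 1" using L0 L1 by (simp add: power_le_one)
      then have "L ^ n * \<delta> \<le> 1 * \<delta>" using H by (intro mult_right_mono) auto
      then have "L ^ n * \<delta> \<le> \<delta>" by (simp only: mult_1)
      then have \<eta>1: "\<eta> \<le> \<delta>0" unfolding \<eta>_def using H by linarith
      define xs where "xs = (\<lambda>i. case i of 0 \<Rightarrow> z | Suc j \<Rightarrow> (f ^^ j) y)"
      have "pseudo_orbit f \<eta> xs"
        unfolding pseudo_orbit_def
      proof
        fix i show "dist (f (xs i)) (xs (Suc i)) \<le> \<eta>"
          using z2 \<eta>0 by (cases i) (auto simp: xs_def \<eta>_def)
      qed
      then obtain w where w: "shadows f (L * \<eta>) w xs" using sh \<eta>0 \<eta>1 by blast
      have "dist ((f ^^ 0) w) (xs 0) \<le> L * \<eta>" using w unfolding shadows_def by blast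
      then have w0: "dist w z \<le> L * \<eta>" by (simp add: xs_def)
      have "dist ((f ^^ 1) w) (xs 1) \<le> L * \<eta>" using w unfolding shadows_def by blast
      then have w1: "dist (f w) y \<le> L * \<eta>" by (simp add: xs_def)
      have "L * \<eta> \<le> L * \<delta>" using \<eta>1 \<open>L ^ n * \<delta> \<le> 1 * \<delta>\<close> L0 unfolding \<eta>_def
        by (intro mult_left_mono) auto
      then have "dist w x \<le> L * \<delta>" using U[of w x z] w0 z1 by simp
      moreover have "dist (f w) y \<le> L ^ Suc n * \<delta>" using w1 by (simp add: \<eta>_def mult.assoc)
      ultimately show ?case by blast
    qed
    have cl: "closed (f ` cball x (L * \<delta>))"
    proof (rule compact_imp_closed, rule compact_continuous_image)
      show "continuous_on (cball x (L * \<delta>)) f" using cont by (rule continuous_on_subset) simp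
      show "compact (cball x (L * \<delta>))"
        using compact_Int_closed[OF cpt closed_cball[of x "L*\<delta>"]] by simp
    qed
    have "\<forall>e>0. \<exists>u\<in>f ` cball x (L * \<delta>). dist u y < e"
    proof (intro allI impI)
      fix e :: real assume e: "e > 0"
      have "e / \<delta> > 0" using e H by simp
      then obtain n where n: "L ^ n < e / \<delta>" using real_arch_pow_inv[OF _ L1] by blast
      obtain z where "dist z x \<le> L * \<delta>" "dist (f z) y \<le> L ^ n * \<delta>" using P by blast
      moreover have "L ^ n * \<delta> < e" using n H by (simp add: pos_less_divide_eq)
      ultimately show "\<exists>u\<in>f ` cball x (L * \<delta>). dist u y < e"
        by (intro bexI[of _ "f z"]) (auto simp: dist_commute)
    qed
    then show "y \<in> f ` cball x (L * \<delta>)" using closed_approachable[OF cl] by blast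
  qed
qed

lemma dir2:
  fixes f :: "'a::metric_space \<Rightarrow> 'a" and L :: real
  assumes cpt: "compact (UNIV :: 'a set)"
    and um: "ultrametric_space TYPE('a)"
    and L0: "0 < L" and L1: "L < 1"
    and cont: "continuous_on UNIV f"
    and B: "\<exists>\<delta>0>0. \<forall>\<delta> x. 0 < \<delta> \<and> \<delta> \<le> \<delta>0 \<longrightarrow> cball (f x) \<delta> \<subseteq> f ` cball x (L * \<delta>)"
  shows "lipschitz_shadowing L f"
proof -
  from B obtain \<delta>0 where d0: "\<delta>0 > 0" and
    bl: "\<And>\<delta> x. 0 < \<delta> \<Longrightarrow> \<delta> \<le> \<delta>0 \<Longrightarrow> cball (f x) \<delta> \<subseteq> f ` cball x (L * \<delta>)"
    by blast
  have U: "dist a c \<le> max (dist a b) (dist b c)" for a b c :: 'a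
    using um unfolding ultrametric_space_def by blast
  show ?thesis unfolding lipschitz_shadowing_def
  proof (intro exI[of _ \<delta>0] conjI allI impI d0)
    fix \<delta> xs assume H: "0 < \<delta> \<and> \<delta> \<le> \<delta>0" and po: "pseudo_orbit f \<delta> xs"
    have po': "dist (f (xs i)) (xs (Suc i)) \<le> \<delta>" for i using po unfolding pseudo_orbit_def by blast
    have S: "\<forall>m w. dist w (xs (m+n)) \<le> L * \<delta> \<longrightarrow>
      (\<exists>z. (\<forall>i\<le>n. dist ((f^^i) z) (xs (m+i)) \<le> L * \<delta>) \<and> (f^^n) z = w)" for n
    proof (induction n)
      case 0 then show ?case by auto
    next
      case (Suc n)
      show ?case
      proof (intro allI impI)
        fix m w assume w: "dist w (xs (m + Suc n)) \<le> L * \<delta>"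
        then have "dist w (xs (Suc m + n)) \<le> L * \<delta>" by simp
        then obtain z' where z'1: "\<forall>i\<le>n. dist ((f^^i) z') (xs (Suc m+i)) \<le> L * \<delta>"
          and z'2: "(f^^n) z' = w" using Suc.IH by blast
        have "dist z' (xs (Suc m)) \<le> L * \<delta>" using z'1[rule_format, of 0] by simp
        moreover have "L * \<delta> \<le> \<delta>" using L1 H by simp
        ultimately have "dist z' (f (xs m)) \<le> \<delta>"
          using U[of z' "f (xs m)" "xs (Suc m)"] po'[of m] by (simp add: dist_commute)
        then have "z' \<in> cball (f (xs m)) \<delta>" by (simp add: dist_commute)
        then obtain z where z1: "z \<in> cball (xs m) (L * \<delta>)" and z2: "z' = f z" using bl H by blast
        have "\<forall>i\<le>Suc n. dist ((f^^i) z) (xs (m+i)) \<le> L * \<delta>"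
        proof (intro allI impI)
          fix i assume i: "i \<le> Suc n"
          show "dist ((f^^i) z) (xs (m+i)) \<le> L * \<delta>"
          proof (cases i)
            case 0 then show ?thesis using z1 by (simp add: dist_commute)
          next
            case (Suc j)
            then have "(f^^i) z = (f^^j) z'" using z2 by (simp add: funpow_Suc_right del: funpow.simps)
            then show ?thesis using z'1[rule_format, of j] Suc i by simp
          qed
        qed
        moreover have "(f^^Suc n) z = w" using z2 z'2 by (simp add: funpow_Suc_right del: funpow.simps)
        ultimately show "\<exists>z. (\<forall>i\<le>Suc n. dist ((f^^i) z) (xs (m+i)) \<le> L * \<delta>) \<and> (f^^Suc n) z = w"
          by blast
      qed
    qed
    define K where "K i = {z. dist ((f^^i) z) (xs i) \<le> L * \<delta>}" for i
    have "UNIV \<inter> \<Inter> (K ` UNIV) \<noteq> {}"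
    proof (rule compact_imp_fip_image[OF cpt])
      fix i :: nat
      show "closed (K i)" unfolding K_def
        by (intro closed_Collect_le continuous_on_dist cont_funpow[OF cont] continuous_on_const)
    next
      fix I' :: "nat set" assume "finite I'"
      then obtain N where N: "\<forall>i\<in>I'. i \<le> N" using finite_nat_set_iff_bounded_le by blast
      obtain z where "\<forall>i\<le>N. dist ((f^^i) z) (xs (0+i)) \<le> L * \<delta>"
        using S[of N, rule_format, where m=0 and w="xs N"] H L0 by auto
      then have "z \<in> \<Inter> (K ` I')" using N unfolding K_def by auto
      then show "UNIV \<inter> \<Inter> (K ` I') \<noteq> {}" by blast
    qed
    then obtain z where "\<forall>i. z \<in> K i" by blast
    then show "\<exists>x. shadows f (L * \<delta>) x xs" unfolding shadows_def K_def by blast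
  qed
qed

theorem theorem1p6:
  fixes f :: "'a::metric_space \<Rightarrow> 'a" and L :: real
  assumes "compact (UNIV :: 'a set)"
    and "ultrametric_space TYPE('a)"
    and "0 < L" and "L < 1"
    and "continuous_on UNIV f"
  shows "lipschitz_shadowing L f \<longleftrightarrow>
         (\<exists>\<delta>0>0. \<forall>\<delta> x. 0 < \<delta> \<and> \<delta> \<le> \<delta>0 \<longrightarrow> cball (f x) \<delta> \<subseteq> f ` cball x (L * \<delta>))"
  using dir1[OF assms] dir2[OF assms] by blast

end
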